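(* Let $S$ be a poset and let $S\otimes_i G_i$ and $S\otimes_i H_i$ be terminating ordered joins in the same shape $S$. Suppose $i_0\in S$ is a maximal element of $S$ and $G_i=H_i$ for all $i\neq i_0$. If $G_{i_0}\not\simeq_0 H_{i_0}$, then $S\otimes_i G_i \not\simeq_0 S\otimes_i H_i$. (Together with the special substitution theorem: $S\otimes_i G_i\simeq_0 S\otimes_i H_i$ if and only if $G_{i_0}\simeq_0 H_{i_0}$.)
   Context: All games are impartial combinatorial games under normal play; a game is determined by its set of options, and $G \to G'$ means $G'$ is an option of $G$. A game is terminating if it admits no infinite sequence of moves. $\mathbf{0}$ denotes the game with no options. The Grundy number of a terminating game $G$ is the ordinal $\Gamma_0(G)=\operatorname{mex}\{\Gamma_0(G') : G\to G'\}$, where $\operatorname{mex}\Lambda$ is the least ordinal not in the set of ordinals $\Lambda$. Games $G,H$ are $0$-equivalent, $G\simeq_0 H$, if $\Gamma_0(G)=\Gamma_0(H)$. Ordered join: for a poset $S$ and a family $(G_i)_{i\in S}$ of games, $S \otimes_i G_i$ is the game whose options are exactly the ordered joins $S \otimes_i G'_i$ obtained by choosing one $i_0\in S$ and an option $G_{i_0}\to G'_{i_0}$, and setting $G'_i=\mathbf{0}$ for all $i>i_0$ and $G'_i=G_i$ for all other $i\ne i_0$. *)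

theory Defs
  imports Main
begin

text \<open>Impartial games are modelled as positions of a game graph: a type 'p of
positions together with a move relation mv, where mv x y means that y is an
option of x.\<close>

definition terminating :: "('p \<Rightarrow> 'p \<Rightarrow> bool) \<Rightarrow> 'p \<Rightarrow> bool" where
  "terminating mv x \<longleftrightarrow> \<not> (\<exists>f. f 0 = x \<and> (\<forall>n. mv (f n) (f (Suc n))))"

text \<open>Ordinals: Grundy values of positions of type 'p are taken in a fixed
well-order on 'p set (of cardinality strictly larger than 'p, hence long enough
that every mex of a set of Grundy values of options exists). Only equality of
Grundy values is used, which is independent of the chosen well-order.\<close>

definition ord_wo :: "('a set \<times> 'a set) set" where
  "ord_wo = (SOME r. well_order_on UNIV r)"

definition mex :: "'a set set \<Rightarrow> 'a set" where
  "mex \<Lambda> = (SOME a. a \<notin> \<Lambda> \<and> (\<forall>b. b \<notin> \<Lambda> \<longrightarrow> (a, b) \<in> ord_wo))"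

definition grundy :: "('p \<Rightarrow> 'p \<Rightarrow> bool) \<Rightarrow> 'p \<Rightarrow> 'p set" where
  "grundy mv = wfrec {(y, x). mv x y \<and> terminating mv x}
                     (\<lambda>f x. mex (f ` {y. mv x y}))"

definition zero_equiv :: "('p \<Rightarrow> 'p \<Rightarrow> bool) \<Rightarrow> 'p \<Rightarrow> 'p \<Rightarrow> bool" where
  "zero_equiv mv G H \<longleftrightarrow> grundy mv G = grundy mv H"

text \<open>Ordered join over a poset S (a subset of an ordered type 'i). z is the
zero game (a position without options). The ordered join of the family G is the
position ojoin S z G of the graph ojoin_mv S z mv on families 'i \<Rightarrow> 'p.\<close>

definition ojoin :: "'i set \<Rightarrow> 'p \<Rightarrow> ('i \<Rightarrow> 'p) \<Rightarrow> ('i \<Rightarrow> 'p)" where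
  "ojoin S z G = (\<lambda>i. if i \<in> S then G i else z)"

definition ojoin_mv :: "'i::order set \<Rightarrow> 'p \<Rightarrow> ('p \<Rightarrow> 'p \<Rightarrow> bool)
                        \<Rightarrow> ('i \<Rightarrow> 'p) \<Rightarrow> ('i \<Rightarrow> 'p) \<Rightarrow> bool" where
  "ojoin_mv S z mv F F' \<longleftrightarrow>
     (\<exists>i0\<in>S. mv (F i0) (F' i0)
        \<and> (\<forall>i\<in>S. i0 < i \<longrightarrow> F' i = z)
        \<and> (\<forall>i\<in>S. i \<noteq> i0 \<and> \<not> i0 < i \<longrightarrow> F' i = F i)
        \<and> (\<forall>i. i \<notin> S \<longrightarrow> F' i = F i))"

end

theory Submission
  imports Defs
begin

lemma term_step: "terminating mv x \<Longrightarrow> mv x y \<Longrightarrow> terminating mv y"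
proof -
  assume t: "terminating mv x" and m: "mv x y"
  show "terminating mv y" unfolding terminating_def
  proof
    assume "\<exists>f. f 0 = y \<and> (\<forall>n. mv (f n) (f (Suc n)))"
    then obtain f where f0: "f 0 = y" and c: "\<forall>n. mv (f n) (f (Suc n))" by blast
    let ?g = "\<lambda>n. case n of 0 \<Rightarrow> x | Suc m \<Rightarrow> f m"
    have "\<forall>n. mv (?g n) (?g (Suc n))" using m c f0 by (auto split: nat.split)
    moreover have "?g 0 = x" by simp
    ultimately show False using t unfolding terminating_def by blast
  qed
qed

lemma wf_R: "wf {(y, x). mv x y \<and> terminating mv x}"
  unfolding wf_iff_no_infinite_down_chain terminating_def by auto

lemma grundy_eq: "terminating mv x \<Longrightarrow> grundy mv x = mex (grundy mv ` {y. mv x y})"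
proof -
  assume t: "terminating mv x"
  have "grundy mv x = mex ((cut (grundy mv) {(y, x). mv x y \<and> terminating mv x} x) ` {y. mv x y})"
    unfolding grundy_def by (subst wfrec[OF wf_R]) simp
  also have "\<dots> = mex (grundy mv ` {y. mv x y})"
    using t by (auto simp: cut_apply intro!: arg_cong[where f=mex] image_cong)
  finally show ?thesis .
qed

lemma wo: "well_order_on UNIV ord_wo"
  unfolding ord_wo_def by (rule someI_ex) (rule well_order_on)

lemma mex_props:
  fixes \<Lambda> :: "'a set set"
  assumes "b0 \<notin> \<Lambda>"
  shows "mex \<Lambda> \<notin> \<Lambda> \<and> (\<forall>b. b \<notin> \<Lambda> \<longrightarrow> (mex \<Lambda>, b) \<in> ord_wo)"
proof -
  have w: "wf (ord_wo - Id)" and lin: "linear_order_on UNIV ord_wo"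
    using wo by (auto simp: well_order_on_def)
  obtain m where m: "m \<in> - \<Lambda>" "\<forall>b. (b, m) \<in> ord_wo - Id \<longrightarrow> b \<notin> - \<Lambda>"
    using wfE_min[OF w, of b0 "- \<Lambda>"] assms by blast
  have "\<forall>b. b \<notin> \<Lambda> \<longrightarrow> (m, b) \<in> ord_wo"
  proof (intro allI impI)
    fix b assume bn: "b \<notin> \<Lambda>"
    have tot: "total_on UNIV (ord_wo :: ('a set \<times> 'a set) set)" and rf: "refl_on UNIV (ord_wo :: ('a set \<times> 'a set) set)" using lin
      by (auto simp: linear_order_on_def partial_order_on_def preorder_on_def)
    show "(m, b) \<in> ord_wo"
    proof (cases "b = m")
      case True then show ?thesis using rf by (simp add: refl_on_def)
    next
      case False
      have "(b, m) \<notin> ord_wo - Id" using m(2) bn by blast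
      then have "(b, m) \<notin> ord_wo" using False by auto
      moreover have "(m, b) \<in> ord_wo \<or> (b, m) \<in> ord_wo"
        using tot False by (simp add: total_on_def)
      ultimately show ?thesis by simp
    qed
  qed
  then have "\<exists>a. a \<notin> \<Lambda> \<and> (\<forall>b. b \<notin> \<Lambda> \<longrightarrow> (a, b) \<in> ord_wo)" using m by blast
  then show ?thesis unfolding mex_def by (rule someI_ex)
qed

lemma cantor_out: "{y. y \<notin> grundy mv y} \<notin> grundy mv ` A"
  by auto

lemma mex_grundy:
  assumes "terminating mv G"
  shows "grundy mv G \<notin> grundy mv ` {y. mv G y}
    \<and> (\<forall>b. b \<notin> grundy mv ` {y. mv G y} \<longrightarrow> (grundy mv G, b) \<in> ord_wo)"
proof -
  have e: "grundy mv G = mex (grundy mv ` {y. mv G y})" by (rule grundy_eq[OF assms])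
  show ?thesis unfolding e by (rule mex_props[OF cantor_out])
qed

lemma opt_neq: "terminating mv G \<Longrightarrow> mv G G' \<Longrightarrow> grundy mv G' \<noteq> grundy mv G"
proof
  assume t: "terminating mv G" and m: "mv G G'" and e: "grundy mv G' = grundy mv G"
  have "grundy mv G' \<in> grundy mv ` {y. mv G y}" using m by blast
  then show False using mex_grundy[OF t] e by simp
qed

lemma key:
  fixes mv :: "'p \<Rightarrow> 'p \<Rightarrow> bool"
  assumes tG: "terminating mv G" and tH: "terminating mv H" and ne: "grundy mv G \<noteq> grundy mv H"
  shows "(\<exists>H'. mv H H' \<and> grundy mv H' = grundy mv G) \<or> (\<exists>G'. mv G G' \<and> grundy mv G' = grundy mv H)"
proof (rule ccontr)
  assume n: "\<not> ?thesis"
  have n1: "grundy mv G \<notin> grundy mv ` {y. mv H y}" using n by blast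
  have n2: "grundy mv H \<notin> grundy mv ` {y. mv G y}" using n by blast
  have a: "(grundy mv H, grundy mv G) \<in> ord_wo"
    using mex_grundy[OF tH] n1 by blast
  have b: "(grundy mv G, grundy mv H) \<in> ord_wo"
    using mex_grundy[OF tG] n2 by blast
  have "antisym (ord_wo :: ('p set \<times> 'p set) set)" using wo[where 'a='p]
    by (simp add: well_order_on_def linear_order_on_def partial_order_on_def)
  then show False using a b ne by (metis antisymD)
qed

lemma lift_i0:
  assumes "i0 \<in> S" "\<forall>i\<in>S. \<not> i0 < i" "mv (P i0) X'"
  shows "ojoin_mv S z mv P (P(i0:=X'))"
  unfolding ojoin_mv_def using assms by (intro bexI[of _ i0]) auto

lemma term_comp:
  assumes i0S: "i0 \<in> S" and mx: "\<forall>i\<in>S. \<not> i0 < i"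
    and t: "terminating (ojoin_mv S z mv) P"
  shows "terminating mv (P i0)"
  unfolding terminating_def
proof
  assume "\<exists>f. f 0 = P i0 \<and> (\<forall>n. mv (f n) (f (Suc n)))"
  then obtain f where f0: "f 0 = P i0" and c: "\<forall>n. mv (f n) (f (Suc n))" by blast
  let ?g = "\<lambda>n. P(i0 := f n)"
  have "\<forall>n. ojoin_mv S z mv (?g n) (?g (Suc n))"
  proof
    fix n
    have "ojoin_mv S z mv (?g n) ((?g n)(i0 := f (Suc n)))"
      by (rule lift_i0[OF i0S mx]) (simp add: c)
    then show "ojoin_mv S z mv (?g n) (?g (Suc n))" by simp
  qed
  moreover have "?g 0 = P" using f0 by auto
  ultimately have "\<exists>f. f 0 = P \<and> (\<forall>n. ojoin_mv S z mv (f n) (f (Suc n)))"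
    by (intro exI[of _ ?g]) simp
  then show False using t unfolding terminating_def by blast
qed

lemma transfer:
  assumes i0S: "i0 \<in> S" and mx: "\<forall>i\<in>S. \<not> i0 < i"
    and m: "ojoin_mv S z mv P P'" and ag: "\<forall>i. i \<noteq> i0 \<longrightarrow> P i = Q i"
  shows "(\<exists>X'. mv (P i0) X' \<and> P' = P(i0:=X')) \<or> ojoin_mv S z mv Q P'
     \<or> (P' i0 = P i0 \<and> ojoin_mv S z mv Q (P'(i0 := Q i0)))"
proof -
  obtain j where jS: "j \<in> S" and mj: "mv (P j) (P' j)"
    and up: "\<forall>i\<in>S. j < i \<longrightarrow> P' i = z"
    and oth: "\<forall>i\<in>S. i \<noteq> j \<and> \<not> j < i \<longrightarrow> P' i = P i"
    and out: "\<forall>i. i \<notin> S \<longrightarrow> P' i = P i"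
    using m unfolding ojoin_mv_def by blast
  show ?thesis
  proof (cases "j = i0")
    case True
    have "P' = P(i0 := P' i0)"
    proof
      fix i show "P' i = (P(i0 := P' i0)) i"
        using True oth out mx by (cases "i \<in> S") auto
    qed
    then show ?thesis using True mj by blast
  next
    case jn: False
    show ?thesis
    proof (cases "j < i0")
      case True
      have "ojoin_mv S z mv Q P'"
        unfolding ojoin_mv_def
      proof (intro bexI[of _ j] conjI ballI allI impI)
        show "mv (Q j) (P' j)" using mj ag jn by metis
        fix i assume "i \<in> S" "i \<noteq> j \<and> \<not> j < i"
        then show "P' i = Q i" using oth ag True by (metis)
      next
        fix i assume "i \<notin> S" then show "P' i = Q i" using out ag i0S by metis
      qed (use up jS in auto)
      then show ?thesis by blast
    next
      case False
      have e: "P' i0 = P i0" using oth i0S jn False by auto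
      have "ojoin_mv S z mv Q (P'(i0 := Q i0))"
        unfolding ojoin_mv_def
        using jS mj up oth out ag jn False i0S
        by (intro bexI[of _ j]) auto
      then show ?thesis using e by blast
    qed
  qed
qed


lemma main_claim:
  fixes S :: "'i::order set" and mv :: "'p \<Rightarrow> 'p \<Rightarrow> bool"
  assumes i0S: "i0 \<in> S" and mx: "\<forall>i\<in>S. \<not> i0 < i"
  shows "terminating (ojoin_mv S z mv) P0 \<longrightarrow> (\<forall>Q. terminating (ojoin_mv S z mv) Q
     \<longrightarrow> (\<forall>i. i \<noteq> i0 \<longrightarrow> P0 i = Q i)
     \<longrightarrow> (grundy (ojoin_mv S z mv) P0 = grundy (ojoin_mv S z mv) Q
          \<longleftrightarrow> grundy mv (P0 i0) = grundy mv (Q i0)))"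
proof (induction P0 rule: wf_induct[OF wf_R[of "ojoin_mv S z mv"]])
  case (1 P)
  let ?M = "ojoin_mv S z mv"
  let ?G = "grundy ?M" and ?g = "grundy mv"
  have IHo0: "\<forall>y. (y, P) \<in> {(y, x). ?M x y \<and> terminating ?M x} \<longrightarrow>
     (terminating ?M y \<longrightarrow> (\<forall>Q. terminating ?M Q \<longrightarrow> (\<forall>i. i \<noteq> i0 \<longrightarrow> y i = Q i)
       \<longrightarrow> (?G y = ?G Q \<longleftrightarrow> ?g (y i0) = ?g (Q i0))))" using 1 by simp
  show "terminating ?M P \<longrightarrow> (\<forall>Q. terminating ?M Q \<longrightarrow> (\<forall>i. i \<noteq> i0 \<longrightarrow> P i = Q i)
       \<longrightarrow> (?G P = ?G Q \<longleftrightarrow> ?g (P i0) = ?g (Q i0)))"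
  proof (rule impI, rule allI)
    fix Q0 assume tP: "terminating ?M P"
    have IHo: "\<And>P' Q. ?M P P' \<Longrightarrow> terminating ?M Q \<Longrightarrow> (\<forall>i. i \<noteq> i0 \<longrightarrow> P' i = Q i)
       \<Longrightarrow> (?G P' = ?G Q \<longleftrightarrow> ?g (P' i0) = ?g (Q i0))"
      using IHo0 tP term_step[OF tP] by blast
    have tX: "terminating mv (P i0)" by (rule term_comp[OF i0S mx tP])
    show "terminating ?M Q0 \<longrightarrow> (\<forall>i. i \<noteq> i0 \<longrightarrow> P i = Q0 i) \<longrightarrow> (?G P = ?G Q0 \<longleftrightarrow> ?g (P i0) = ?g (Q0 i0))"
    proof (induction Q0 rule: wf_induct[OF wf_R[of "?M"]])
      case (1 Q)
      have IHi0: "\<forall>y. (y, Q) \<in> {(y, x). ?M x y \<and> terminating ?M x} \<longrightarrow>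
         (terminating ?M y \<longrightarrow> (\<forall>i. i \<noteq> i0 \<longrightarrow> P i = y i) \<longrightarrow> (?G P = ?G y \<longleftrightarrow> ?g (P i0) = ?g (y i0)))" using 1 by simp
      show "terminating ?M Q \<longrightarrow> (\<forall>i. i \<noteq> i0 \<longrightarrow> P i = Q i) \<longrightarrow> (?G P = ?G Q \<longleftrightarrow> ?g (P i0) = ?g (Q i0))"
      proof (intro impI)
        assume tQ: "terminating ?M Q" and ag: "\<forall>i. i \<noteq> i0 \<longrightarrow> P i = Q i"
        have IHi: "\<And>Q'. ?M Q Q' \<Longrightarrow> (\<forall>i. i \<noteq> i0 \<longrightarrow> P i = Q' i)
            \<Longrightarrow> (?G P = ?G Q' \<longleftrightarrow> ?g (P i0) = ?g (Q' i0))"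
          using IHi0 tQ term_step[OF tQ] by blast
        have tY: "terminating mv (Q i0)" by (rule term_comp[OF i0S mx tQ])
        have ag': "\<forall>i. i \<noteq> i0 \<longrightarrow> Q i = P i" using ag by auto
        show "?G P = ?G Q \<longleftrightarrow> ?g (P i0) = ?g (Q i0)"
        proof
          assume e: "?G P = ?G Q"
          show "?g (P i0) = ?g (Q i0)"
          proof (rule ccontr)
            assume ne: "?g (P i0) \<noteq> ?g (Q i0)"
            from key[OF tX tY ne] show False
            proof
              assume "\<exists>Y'. mv (Q i0) Y' \<and> ?g Y' = ?g (P i0)"
              then obtain Y' where y1: "mv (Q i0) Y'" and y2: "?g Y' = ?g (P i0)" by blast
              have mQ: "?M Q (Q(i0 := Y'))" using lift_i0[OF i0S mx, of mv Q Y' z] y1 by simp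
              have "?G P = ?G (Q(i0 := Y'))" using IHi[OF mQ] ag y2 by auto
              then show False using opt_neq[of ?M Q, OF tQ mQ] e by simp
            next
              assume "\<exists>X'. mv (P i0) X' \<and> ?g X' = ?g (Q i0)"
              then obtain X' where x1: "mv (P i0) X'" and x2: "?g X' = ?g (Q i0)" by blast
              have mP: "?M P (P(i0 := X'))" using lift_i0[OF i0S mx, of mv P X' z] x1 by simp
              have "?G (P(i0 := X')) = ?G Q" using IHo[OF mP tQ] ag x2 by auto
              then show False using opt_neq[of ?M P, OF tP mP] e by simp
            qed
          qed
        next
          assume e: "?g (P i0) = ?g (Q i0)"
          show "?G P = ?G Q"
          proof (rule ccontr)
            assume ne: "?G P \<noteq> ?G Q"
            from key[OF tP tQ ne] show False
            proof
              assume "\<exists>Q'. ?M Q Q' \<and> ?G Q' = ?G P"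
              then obtain Q' where q1: "?M Q Q'" and q2: "?G Q' = ?G P" by blast
              from transfer[OF i0S mx q1 ag'] show False
              proof (elim disjE conjE exE)
                fix Y' assume y1: "mv (Q i0) Y'" and qq: "Q' = Q(i0 := Y')"
                have "?g (P i0) = ?g Y'" using IHi[OF q1] ag qq q2 by auto
                then show False using opt_neq[OF tY y1] e by simp
              next
                assume "?M P Q'" then show False using opt_neq[of ?M P, OF tP] q2 by blast
              next
                assume qi: "Q' i0 = Q i0" and mP: "?M P (Q'(i0 := P i0))"
                have tQ': "terminating ?M Q'" using term_step[of ?M Q, OF tQ q1] .
                have "?G (Q'(i0 := P i0)) = ?G Q'"
                  using IHo[OF mP tQ'] e qi by auto
                then show False using opt_neq[of ?M P, OF tP mP] q2 by simp
              qed
            next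
              assume "\<exists>P'. ?M P P' \<and> ?G P' = ?G Q"
              then obtain P' where p1: "?M P P'" and p2: "?G P' = ?G Q" by blast
              from transfer[OF i0S mx p1 ag] show False
              proof (elim disjE conjE exE)
                fix X' assume x1: "mv (P i0) X'" and pp: "P' = P(i0 := X')"
                have "?g X' = ?g (Q i0)" using IHo[OF p1 tQ] ag pp p2 by auto
                then show False using opt_neq[OF tX x1] e by simp
              next
                assume "?M Q P'" then show False using opt_neq[of ?M Q, OF tQ] p2 by blast
              next
                assume pi: "P' i0 = P i0" and mQ: "?M Q (P'(i0 := Q i0))"
                have tQ': "terminating ?M (P'(i0 := Q i0))" using term_step[of ?M Q, OF tQ mQ] .
                have "?G P' = ?G (P'(i0 := Q i0))"
                  using IHo[OF p1 tQ'] e pi by auto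
                then show False using opt_neq[of ?M Q, OF tQ mQ] p2 by simp
              qed
            qed
          qed
        qed
      qed
    qed
  qed
qed

theorem mainTheorem4:
  fixes S :: "'i::order set" and mv :: "'p \<Rightarrow> 'p \<Rightarrow> bool" and z :: 'p
    and G H :: "'i \<Rightarrow> 'p" and i0 :: 'i
  assumes zero: "\<forall>y. \<not> mv z y"
    and termG: "terminating (ojoin_mv S z mv) (ojoin S z G)"
    and termH: "terminating (ojoin_mv S z mv) (ojoin S z H)"
    and i0S: "i0 \<in> S"
    and i0max: "\<forall>i\<in>S. \<not> i0 < i"
    and same: "\<forall>i\<in>S. i \<noteq> i0 \<longrightarrow> G i = H i"
    and neq: "\<not> zero_equiv mv (G i0) (H i0)"
  shows "\<not> zero_equiv (ojoin_mv S z mv) (ojoin S z G) (ojoin S z H)"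
proof -
  have ag: "\<forall>i. i \<noteq> i0 \<longrightarrow> ojoin S z G i = ojoin S z H i"
    using same by (auto simp: ojoin_def)
  have "ojoin S z G i0 = G i0" "ojoin S z H i0 = H i0" using i0S by (auto simp: ojoin_def)
  then show ?thesis
    using main_claim[OF i0S i0max, of z mv "ojoin S z G"] termG termH ag neq
    unfolding zero_equiv_def by auto
qed

end
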